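(* Let $H=(V,E)$ be a geometric hypergraph on points in the plane, i.e., $V$ is a finite set of points in $\mathbb{R}^2$ and $E$ is a family of subsets of $V$, where every edge $A\in E$ has $|A|\ge 2$. Then $H$ admits a separating cycle if and only if $H$ is $2$-colorable.
   Context: A hypergraph $H=(V,E)$ is $2$-colorable if there is a coloring of $V$ with two colors such that no edge $A\in E$ is monochromatic. For a simple closed polygonal curve $C$ in the plane, let $\mathring{C}$, $\partial C$, $\overline{C}$ denote its interior, boundary and exterior. A polygonal cycle $C$ is a separating cycle for $H$ if (i) $C$ is simple (no self-intersections) and (ii) for each edge $A\in E$, both $A\cap(\mathring{C}\cup\partial C)$ and $A\cap\overline{C}$ are nonempty. *)

theory Defs
  imports "HOL-Analysis.Analysis"
begin

fun polygonal_path :: "(real^2) list \<Rightarrow> real \<Rightarrow> real^2" where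
  "polygonal_path [] = linepath 0 0"
| "polygonal_path [a] = linepath a a"
| "polygonal_path [a, b] = linepath a b"
| "polygonal_path (a # b # xs) = linepath a b +++ polygonal_path (b # xs)"

definition polygon_cycle :: "(real^2) list \<Rightarrow> real \<Rightarrow> real^2" where
  "polygon_cycle ps = polygonal_path (ps @ [hd ps])"

definition two_colorable :: "'a set \<Rightarrow> 'a set set \<Rightarrow> bool" where
  "two_colorable V E \<longleftrightarrow>
     (\<exists>c :: 'a \<Rightarrow> bool. \<forall>A\<in>E. \<exists>x\<in>A. \<exists>y\<in>A. c x \<noteq> c y)"

definition separating_cycle :: "(real^2) set set \<Rightarrow> (real \<Rightarrow> real^2) \<Rightarrow> bool" where
  "separating_cycle E C \<longleftrightarrow>
     (\<exists>ps. C = polygon_cycle ps) \<and> simple_path C \<and>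
     (\<forall>A\<in>E. A \<inter> (inside (path_image C) \<union> path_image C) \<noteq> {}
            \<and> A \<inter> outside (path_image C) \<noteq> {})"

end

theory Submission imports Defs begin

definition xc :: "real \<Rightarrow> real^2 \<Rightarrow> real" where "xc s p = p$1 + s * p$2"
definition pt :: "real \<Rightarrow> real \<Rightarrow> real \<Rightarrow> real^2" where "pt s x y = (\<chi> i. if i = 1 then x - s*y else y)"

lemma pt_simps[simp]: "pt s x y $ 1 = x - s*y" "pt s x y $ 2 = y" "xc s (pt s x y) = x"
  by (auto simp: pt_def xc_def)

lemma pt_eqI: "xc s p = xc s q \<Longrightarrow> p$2 = q$2 \<Longrightarrow> p = q"
  by (simp add: vec_eq_iff forall_2 xc_def)

lemma seg_lin:
  assumes "q \<in> closed_segment a b"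
  obtains t where "0 \<le> t" "t \<le> 1" "xc s q = (1-t)*xc s a + t*xc s b"
     "q$2 = (1-t)*a$2 + t*b$2" "q = (1-t) *\<^sub>R a + t *\<^sub>R b"
  using assms unfolding closed_segment_def
  by (auto simp: xc_def algebra_simps)

lemma seg_end:
  assumes "q \<in> closed_segment a b" "xc s a < xc s b" "xc s q = xc s b"
  shows "q = b"
proof -
  obtain t where t: "0 \<le> t" "t \<le> 1" "xc s q = (1-t)*xc s a + t*xc s b" "q = (1-t) *\<^sub>R a + t *\<^sub>R b"
    using seg_lin[OF assms(1)] by metis
  have e: "xc s b = (1-t)*xc s a + t*xc s b" using t(3) assms(3) by simp
  have "(1-t)*(xc s b - xc s a) = 0" using e by (simp add: algebra_simps)
  then have "t = 1" using assms by simp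
  then show ?thesis using t by simp
qed

lemma seg_start:
  assumes "q \<in> closed_segment a b" "xc s a < xc s b" "xc s q = xc s a"
  shows "q = a"
proof -
  obtain t where t: "0 \<le> t" "t \<le> 1" "xc s q = (1-t)*xc s a + t*xc s b" "q = (1-t) *\<^sub>R a + t *\<^sub>R b"
    using seg_lin[OF assms(1)] by metis
  have e: "xc s a = (1-t)*xc s a + t*xc s b" using t(3) assms(3) by simp
  have "t*(xc s b - xc s a) = 0" using e by (auto simp: algebra_simps)
  moreover have "xc s b - xc s a \<noteq> 0" using assms(2) by simp
  ultimately have "t = 0" by simp
  then show ?thesis using t by simp
qed

lemma pp_cons: "xs \<noteq> [] \<Longrightarrow> polygonal_path (a#b#xs) = linepath a b +++ polygonal_path (b#xs)"
  by (cases xs) auto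

lemma pp_start[simp]: "pathstart (polygonal_path (a#xs)) = a"
  by (induction xs arbitrary: a rule: polygonal_path.induct) (auto simp: pathstart_def linepath_def joinpaths_def)

lemma pp_start': "pathstart (polygonal_path (a#xs)) = a"
  by (cases xs rule: polygonal_path.cases; simp)

lemma pp_finish: "l \<noteq> [] \<Longrightarrow> pathfinish (polygonal_path l) = last l"
  by (induction l rule: polygonal_path.induct) (auto simp: pathfinish_def linepath_def joinpaths_def)

lemma pp_path: "path (polygonal_path l)"
proof (induction l rule: polygonal_path.induct)
  case (4 a b v va)
  have "pathstart (polygonal_path (b#v#va)) = b" by (rule pp_start)
  moreover have "polygonal_path (a#b#v#va) = linepath a b +++ polygonal_path (b#v#va)" by simp
  ultimately show ?case using 4 by (simp only:) (simp add: path_join)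
qed (auto simp: path_def)

lemma pp_image_single[simp]: "path_image (polygonal_path [a]) = {a}"
  by simp

lemma pp_image: "path_image (polygonal_path (a#b#xs)) = closed_segment a b \<union> path_image (polygonal_path (b#xs))"
  by (cases "xs = []") (auto simp: pp_cons path_image_join)

lemma pp_vertices: "set l \<subseteq> path_image (polygonal_path l)"
proof (induction l rule: polygonal_path.induct)
  case (4 a b v va)
  then show ?case by (simp only: pp_image) auto
qed auto

lemma pp_arc:
  assumes "a \<noteq> b" "xs = [] \<or> arc (polygonal_path (b#xs))"
    "closed_segment a b \<inter> path_image (polygonal_path (b#xs)) \<subseteq> {b}"
  shows "arc (polygonal_path (a#b#xs))"
  using assms
  by (cases "xs = []") (auto simp: pp_cons intro!: arc_join)


lemma seg_const_xc:
  assumes "q \<in> closed_segment a b" "xc s a = c" "xc s b = c" shows "xc s q = c"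
proof -
  obtain t where t: "xc s q = (1-t)*xc s a + t*xc s b"
    using seg_lin[OF assms(1)] by metis
  then show ?thesis using assms by (simp add: algebra_simps)
qed

lemma seg_const_y:
  fixes q :: "real^2"
  assumes "q \<in> closed_segment a b" "a$2 = c" "b$2 = c" shows "q$2 = c"
proof -
  obtain t where t: "q$2 = (1-t)*a$2 + t*b$2"
    using seg_lin[OF assms(1)] by metis
  then show ?thesis using assms by (simp add: algebra_simps)
qed

lemma seg_le_xc:
  assumes "q \<in> closed_segment a b" "xc s a \<le> xc s b" shows "xc s q \<le> xc s b"
proof -
  obtain t where t: "0 \<le> t" "t \<le> 1" "xc s q = (1-t)*xc s a + t*xc s b"
    using seg_lin[OF assms(1)] by metis
  have "(1-t)*xc s a \<le> (1-t)*xc s b" using t assms by (intro mult_left_mono) auto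
  then show ?thesis using t by (simp add: algebra_simps)
qed

lemma seg_y_bounds:
  fixes q :: "real^2"
  assumes "q \<in> closed_segment a b" shows "min (a$2) (b$2) \<le> q$2 \<and> q$2 \<le> max (a$2) (b$2)"
proof -
  obtain t where t: "0 \<le> t" "t \<le> 1" "q$2 = (1-t)*a$2 + t*b$2"
    using seg_lin[OF assms(1)] by metis
  have "q$2 \<in> closed_segment (a$2) (b$2)" unfolding closed_segment_def using t by (auto simp: algebra_simps)
  then show ?thesis by (auto simp: closed_segment_eq_real_ivl split: if_splits)
qed

lemma pp_convex: "convex K \<Longrightarrow> l \<noteq> [] \<Longrightarrow> set l \<subseteq> K \<Longrightarrow> path_image (polygonal_path l) \<subseteq> K"
proof (induction l rule: polygonal_path.induct)
  case (3 a b)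
  then show ?case by (simp add: closed_segment_subset)
next
  case (4 a b v va)
  then show ?case by (simp only: pp_image) (auto dest: closed_segment_subset[of a K b])
qed auto

lemma pp_image_snoc: "l \<noteq> [] \<Longrightarrow> path_image (polygonal_path (l @ [x])) = path_image (polygonal_path l) \<union> closed_segment (last l) x"
proof (induction l)
  case (Cons a l)
  show ?case
  proof (cases "l = []")
    case True then show ?thesis by auto
  next
    case False
    then obtain b m where l: "l = b#m" by (cases l) auto
    have "path_image (polygonal_path ((a#l) @ [x])) = closed_segment a b \<union> path_image (polygonal_path (l @ [x]))"
      using l by (simp only: append_Cons pp_image)
    also have "\<dots> = closed_segment a b \<union> path_image (polygonal_path l) \<union> closed_segment (last l) x"
      using Cons False by auto
    also have "\<dots> = path_image (polygonal_path (a#l)) \<union> closed_segment (last (a#l)) x"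
      using l False by (simp only: pp_image) simp
    finally show ?thesis .
  qed
qed simp

lemma chain_img:
  assumes "sorted_wrt (\<lambda>p q. xc s p < xc s q) l" "l \<noteq> []"
  shows "path_image (polygonal_path l) \<subseteq> {q. xc s (hd l) < xc s q \<and> xc s q \<le> xc s (last l)} \<union> {hd l}"
  using assms
proof (induction l)
  case (Cons a l)
  show ?case
  proof (cases "l = []")
    case True then show ?thesis by simp
  next
    case False
    then obtain b m where l: "l = b#m" by (cases l) auto
    have ab: "xc s a < xc s b" using Cons.prems l by simp
    have bl: "xc s b \<le> xc s (last l)"
      using Cons.prems l by (cases "m = []") (auto dest!: last_in_set intro: less_imp_le)
    have IH: "path_image (polygonal_path l) \<subseteq> {q. xc s b < xc s q \<and> xc s q \<le> xc s (last l)} \<union> {b}"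
      using Cons l by simp
    have "closed_segment a b \<subseteq> {q. xc s a < xc s q \<and> xc s q \<le> xc s (last l)} \<union> {a}"
    proof
      fix q assume q: "q \<in> closed_segment a b"
      obtain t where t: "0 \<le> t" "t \<le> 1" "xc s q = (1-t)*xc s a + t*xc s b" "q = (1-t) *\<^sub>R a + t *\<^sub>R b"
        using seg_lin[OF q] by metis
      show "q \<in> {q. xc s a < xc s q \<and> xc s q \<le> xc s (last l)} \<union> {a}"
      proof (cases "t = 0")
        case True then show ?thesis using t by simp
      next
        case False
        then have "t > 0" using t by simp
        then have "t * xc s a < t * xc s b" using ab by simp
        moreover have "xc s q = xc s a + (t * xc s b - t * xc s a)" using t(3) by (simp add: algebra_simps)
        ultimately have "xc s q > xc s a" by linarith
        moreover have "xc s q \<le> xc s b" using seg_le_xc[OF q] ab by simp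
        ultimately show ?thesis using bl by simp
      qed
    qed
    then show ?thesis using IH ab bl l by (simp only: pp_image) auto
  qed
qed simp


lemma mono_arc:
  assumes "sorted_wrt (\<lambda>p q. xc s p < xc s q) l" "l \<noteq> []" "\<forall>p\<in>set l. Y0 \<le> p$2" "Y1 < Y0"
    "a' \<le> xc s (hd l)" "a' < xc s (last l)"
  shows "arc (polygonal_path (l @ [pt s (xc s (last l)) Y1, pt s a' Y1]))"
  using assms
proof (induction l)
  case (Cons a l)
  define d2 where "d2 = pt s (xc s (last (a#l))) Y1"
  define d1 where "d1 = pt s a' Y1"
  show ?case
  proof (cases "l = []")
    case True
    have e: "a \<noteq> d2" using Cons.prems True by (auto simp: d2_def dest: arg_cong[where f="\<lambda>p. p$2"])
    have f: "d2 \<noteq> d1" using Cons.prems True by (auto simp: d2_def d1_def dest: arg_cong[where f="xc s"])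
    have g: "closed_segment a d2 \<inter> closed_segment d2 d1 \<subseteq> {d2}"
    proof
      fix q assume q: "q \<in> closed_segment a d2 \<inter> closed_segment d2 d1"
      have "xc s q = xc s a" using q seg_const_xc[of q a d2 s "xc s a"] True by (auto simp: d2_def)
      moreover have "q$2 = Y1" using q seg_const_y[of q d2 d1 Y1] by (auto simp: d2_def d1_def)
      ultimately have "q = d2" using True by (intro pt_eqI[where s=s]) (auto simp: d2_def)
      then show "q \<in> {d2}" by simp
    qed
    have "arc (linepath a d2 +++ linepath d2 d1)"
      using e f g by (intro arc_join) auto
    then show ?thesis using True by (simp add: d2_def d1_def)
  next
    case False
    then obtain b m where l: "l = b#m" by (cases l) auto
    have ab: "xc s a < xc s b" using Cons.prems l by simp
    have lastl: "last (a#l) = last l" using False by simp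
    have IH: "arc (polygonal_path (l @ [d2, d1]))"
      unfolding d2_def d1_def lastl using Cons l ab by auto
    have bl: "xc s b \<le> xc s (last l)"
      using Cons.prems l by (cases "m = []") (auto dest!: last_in_set intro: less_imp_le)
    have img: "path_image (polygonal_path (l @ [d2, d1])) = path_image (polygonal_path l) \<union> closed_segment (last l) d2 \<union> closed_segment d2 d1"
    proof -
      have "path_image (polygonal_path ((l @ [d2]) @ [d1])) = path_image (polygonal_path (l @ [d2])) \<union> closed_segment d2 d1"
        by (subst pp_image_snoc) auto
      then show ?thesis using pp_image_snoc[of l d2] False by auto
    qed
    have ci: "path_image (polygonal_path l) \<subseteq> {q. xc s b < xc s q \<and> xc s q \<le> xc s (last l)} \<union> {b}"
      using chain_img[of s l] Cons.prems l by auto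
    have ay: "Y0 \<le> a$2" "Y0 \<le> b$2" using Cons.prems l by auto
    have int: "closed_segment a b \<inter> path_image (polygonal_path (l @ [d2, d1])) \<subseteq> {b}"
    proof
      fix q assume q: "q \<in> closed_segment a b \<inter> path_image (polygonal_path (l @ [d2, d1]))"
      then have qs: "q \<in> closed_segment a b" by simp
      have qx: "xc s q \<le> xc s b" using seg_le_xc[OF qs] ab by simp
      have qy: "Y0 \<le> q$2" using seg_y_bounds[OF qs] ay by auto
      consider "q \<in> path_image (polygonal_path l)" | "q \<in> closed_segment (last l) d2" | "q \<in> closed_segment d2 d1"
        using q img by auto
      then show "q \<in> {b}"
      proof cases
        case 1 then show ?thesis using ci qx by auto
      next
        case 2
        have "xc s d2 = xc s (last l)" using lastl by (simp add: d2_def)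
        then have "xc s q = xc s (last l)" using seg_const_xc[OF 2] by simp
        then have "xc s q = xc s b" using qx bl by simp
        then show ?thesis using seg_end[OF qs ab] by simp
      next
        case 3
        then have "q$2 = Y1" using seg_const_y[OF 3] by (simp add: d2_def d1_def)
        then show ?thesis using qy Cons.prems by simp
      qed
    qed
    have "a \<noteq> b" using ab by auto
    have eqs: "l @ [d2, d1] = b # (m @ [d2, d1])" using l by simp
    have "arc (polygonal_path (a # b # (m @ [d2, d1])))"
      using \<open>a \<noteq> b\<close> IH int unfolding eqs by (intro pp_arc) auto
    then have "arc (polygonal_path ((a#l) @ [d2, d1]))" using eqs by simp
    then show ?thesis by (simp only: d2_def d1_def)
  qed
qed simp

lemma cycle_simple:
  assumes "sorted_wrt (\<lambda>p q. xc s p < xc s q) l" "length l \<ge> 2" "\<forall>p\<in>set l. Y0 \<le> p$2" "Y1 < Y0"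
  shows "simple_path (polygon_cycle (pt s (xc s (hd l)) Y1 # l @ [pt s (xc s (last l)) Y1]))"
proof -
  define d1 where "d1 = pt s (xc s (hd l)) Y1"
  define d2 where "d2 = pt s (xc s (last l)) Y1"
  have "\<exists>c1 m. l = c1 # m \<and> m \<noteq> []" using assms(2) by (cases l) auto
  then obtain c1 m where l: "l = c1 # m" "m \<noteq> []" by blast
  have hl: "xc s (hd l) < xc s (last l)" using assms(1) l by (auto dest!: last_in_set)
  have arc2: "arc (polygonal_path (l @ [d2, d1]))"
    unfolding d1_def d2_def using mono_arc[OF assms(1) _ assms(3) assms(4), of "xc s (hd l)"] l hl by auto
  have eq: "polygon_cycle (d1 # l @ [d2]) = linepath d1 c1 +++ polygonal_path (l @ [d2, d1])"
    unfolding polygon_cycle_def using l by (simp add: pp_cons)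
  have c1y: "Y0 \<le> c1$2" using assms(3) l by auto
  have d1c1: "d1 \<noteq> c1" using c1y assms(4) by (auto simp: d1_def dest: arg_cong[where f="\<lambda>p. p$2"])
  have img: "path_image (polygonal_path (l @ [d2, d1])) = path_image (polygonal_path l) \<union> closed_segment (last l) d2 \<union> closed_segment d2 d1"
  proof -
    have "path_image (polygonal_path ((l @ [d2]) @ [d1])) = path_image (polygonal_path (l @ [d2])) \<union> closed_segment d2 d1"
      by (subst pp_image_snoc) auto
    then show ?thesis using pp_image_snoc[of l d2] l by auto
  qed
  have ci: "path_image (polygonal_path l) \<subseteq> {q. xc s c1 < xc s q \<and> xc s q \<le> xc s (last l)} \<union> {c1}"
    using chain_img[OF assms(1)] l by auto
  have int: "closed_segment d1 c1 \<inter> path_image (polygonal_path (l @ [d2, d1])) \<subseteq> {d1, c1}"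
  proof
    fix q assume q: "q \<in> closed_segment d1 c1 \<inter> path_image (polygonal_path (l @ [d2, d1]))"
    then have qs: "q \<in> closed_segment d1 c1" by simp
    have qx: "xc s q = xc s c1" using seg_const_xc[OF qs] l by (simp add: d1_def)
    consider "q \<in> path_image (polygonal_path l)" | "q \<in> closed_segment (last l) d2" | "q \<in> closed_segment d2 d1"
      using q img by auto
    then show "q \<in> {d1, c1}"
    proof cases
      case 1 then show ?thesis using ci qx by auto
    next
      case 2
      then have "xc s q = xc s (last l)" using seg_const_xc[OF 2] by (simp add: d2_def)
      then show ?thesis using qx hl l by simp
    next
      case 3
      then have "q$2 = Y1" using seg_const_y[OF 3] by (simp add: d2_def d1_def)
      then have "q = d1" using qx l by (intro pt_eqI[where s=s]) (auto simp: d1_def)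
      then show ?thesis by simp
    qed
  qed
  have "simple_path (linepath d1 c1 +++ polygonal_path (l @ [d2, d1]))"
    using d1c1 arc2 int l
    by (intro simple_path_join_loop) (auto simp: pp_finish)
  then show ?thesis using eq by (simp add: d1_def d2_def)
qed


lemma seg_xc_bounds:
  assumes "q \<in> closed_segment a b" shows "min (xc s a) (xc s b) \<le> xc s q \<and> xc s q \<le> max (xc s a) (xc s b)"
proof -
  obtain t where t: "0 \<le> t" "t \<le> 1" "xc s q = (1-t)*xc s a + t*xc s b"
    using seg_lin[OF assms(1)] by metis
  have "xc s q \<in> closed_segment (xc s a) (xc s b)" unfolding closed_segment_def using t by (auto simp: algebra_simps)
  then show ?thesis by (auto simp: closed_segment_eq_real_ivl split: if_splits)
qed

fun spikes :: "real \<Rightarrow> real \<Rightarrow> real \<Rightarrow> real \<Rightarrow> (real \<Rightarrow> real^2) \<Rightarrow> real list \<Rightarrow> (real^2) list" where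
  "spikes s e Y0 bnd rd [] = [pt s bnd Y0]"
| "spikes s e Y0 bnd rd (u#us) = pt s (u-e) Y0 # rd u # pt s (u+e) Y0 # spikes s e Y0 bnd rd us"

lemma spikes_ne: "spikes s e Y0 bnd rd us \<noteq> []"
  by (cases us) auto

lemma spikes_last: "last (spikes s e Y0 bnd rd us) = pt s bnd Y0"
  by (induction us) (auto simp: spikes_ne)

lemma spikes_red: "rd ` set us \<subseteq> set (spikes s e Y0 bnd rd us)"
  by (induction us) auto

lemma spikes_lower:
  assumes "0 < e" "\<forall>u\<in>set us. xc s (rd u) = u" "L < bnd" "\<forall>u\<in>set us. L < u - e"
  shows "\<forall>q\<in>set (spikes s e Y0 bnd rd us). L < xc s q"
  using assms by (induction us) auto

lemma spikes_sorted:
  assumes "0 < e" "\<forall>u\<in>set us. xc s (rd u) = u" "sorted_wrt (\<lambda>u u'. u + 2*e < u') us" "\<forall>u\<in>set us. u + e < bnd"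
  shows "sorted_wrt (\<lambda>p q. xc s p < xc s q) (spikes s e Y0 bnd rd us)"
  using assms
proof (induction us)
  case (Cons u us)
  have low: "\<forall>q\<in>set (spikes s e Y0 bnd rd us). u + e < xc s q"
    using Cons.prems by (intro spikes_lower) auto
  then show ?case using Cons by auto
qed simp

lemma spikes_y:
  assumes "\<forall>u\<in>set us. Y0 < (rd u)$2"
  shows "\<forall>q\<in>set (spikes s e Y0 bnd rd us). Y0 \<le> q$2"
  using assms by (induction us) (auto simp: less_imp_le)

lemma spikes_escape:
  assumes "0 < e" "\<forall>u\<in>set us. xc s (rd u) = u" "c$2 = Y0"
  shows "\<forall>q\<in>path_image (polygonal_path (c # spikes s e Y0 bnd rd us)). q$2 \<le> Y0 \<or> (\<exists>u\<in>set us. \<bar>xc s q - u\<bar> \<le> e)"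
  using assms
proof (induction us arbitrary: c)
  case Nil
  show ?case
  proof
    fix q assume "q \<in> path_image (polygonal_path (c # spikes s e Y0 bnd rd []))"
    then have "q \<in> closed_segment c (pt s bnd Y0)" by simp
    then have "q$2 = Y0" using seg_const_y Nil by simp
    then show "q$2 \<le> Y0 \<or> (\<exists>u\<in>set []. \<bar>xc s q - u\<bar> \<le> e)" by simp
  qed
next
  case (Cons u us)
  let ?p = "pt s (u-e) Y0" and ?r = "rd u" and ?p' = "pt s (u+e) Y0"
  have img: "path_image (polygonal_path (c # spikes s e Y0 bnd rd (u#us))) =
     closed_segment c ?p \<union> closed_segment ?p ?r \<union> closed_segment ?r ?p' \<union> path_image (polygonal_path (?p' # spikes s e Y0 bnd rd us))"
    by (simp only: spikes.simps pp_image) auto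
  have IH: "\<forall>q\<in>path_image (polygonal_path (?p' # spikes s e Y0 bnd rd us)). q$2 \<le> Y0 \<or> (\<exists>u\<in>set us. \<bar>xc s q - u\<bar> \<le> e)"
    by (rule Cons.IH) (use Cons.prems in auto)
  have ru: "xc s ?r = u" using Cons.prems by simp
  show ?case
  proof
    fix q assume "q \<in> path_image (polygonal_path (c # spikes s e Y0 bnd rd (u#us)))"
    then consider "q \<in> closed_segment c ?p" | "q \<in> closed_segment ?p ?r" | "q \<in> closed_segment ?r ?p'"
      | "q \<in> path_image (polygonal_path (?p' # spikes s e Y0 bnd rd us))" using img by blast
    then show "q$2 \<le> Y0 \<or> (\<exists>u\<in>set (u#us). \<bar>xc s q - u\<bar> \<le> e)"
    proof cases
      case 1 then show ?thesis using seg_const_y[OF 1] Cons.prems by simp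
    next
      case 2 then show ?thesis using seg_xc_bounds[OF 2, of s] ru Cons.prems by auto
    next
      case 3 then show ?thesis using seg_xc_bounds[OF 3, of s] ru Cons.prems by auto
    next
      case 4 then show ?thesis using IH by auto
    qed
  qed
qed


lemma finite_lower: "finite S \<Longrightarrow> \<exists>b::real. \<forall>x\<in>S. b < x"
proof (induction rule: finite_induct)
  case (insert x F)
  then obtain b where "\<forall>y\<in>F. b < y" by blast
  then show ?case by (intro exI[of _ "min b x - 1"]) auto
qed simp

lemma finite_eta: "finite D \<Longrightarrow> \<forall>d\<in>D. (0::real) < d \<Longrightarrow> \<exists>e>0. e < 1/2 \<and> (\<forall>d\<in>D. 2*e < d)"
proof (induction rule: finite_induct)
  case empty then show ?case by (intro exI[of _ "1/4"]) auto
next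
  case (insert x F)
  then obtain e where e: "e > 0" "e < 1/2" "\<forall>d\<in>F. 2*e < d" by auto
  show ?case using e insert.prems by (intro exI[of _ "min e (x/3)"]) auto
qed

lemma exists_inj_xc:
  assumes "finite V"
  shows "\<exists>s. inj_on (xc s) V"
proof -
  let ?F = "(\<lambda>(p,q). -(p$1-q$1)/(p$2-q$2)) ` (V \<times> V)"
  have "finite ?F" using assms by auto
  then obtain s where s: "s \<notin> ?F" using ex_new_if_finite[OF infinite_UNIV_char_0] by blast
  have "inj_on (xc s) V"
  proof (rule inj_onI)
    fix p q assume pq: "p \<in> V" "q \<in> V" "xc s p = xc s q"
    show "p = q"
    proof (cases "p$2 = q$2")
      case True
      then show ?thesis using pq by (intro pt_eqI[where s=s]) auto
    next
      case False
      have "s * (p$2 - q$2) = -(p$1-q$1)" using pq(3) by (simp add: xc_def algebra_simps)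
      then have "s = -(p$1-q$1)/(p$2-q$2)" using False by (simp add: field_simps)
      then have "s \<in> ?F" using pq by force
      then show ?thesis using s by blast
    qed
  qed
  then show ?thesis by blast
qed

lemma xc_add: "xc s (p + t *\<^sub>R w) = xc s p + t * xc s w"
  by (simp add: xc_def algebra_simps)

lemma escape_outside:
  fixes S :: "(real^2) set"
  assumes "bounded S" "w \<noteq> 0" "\<forall>t\<ge>0. b + t *\<^sub>R w \<notin> S"
  shows "b \<in> outside S"
proof -
  obtain B where B: "B > 0" "S \<subseteq> ball 0 B" using bounded_subset_ballD[OF assms(1)] by blast
  define T where "T = (B + norm b) / norm w"
  have T: "T \<ge> 0" using B assms(2) by (simp add: T_def)
  define z where "z = b + T *\<^sub>R w"
  have "norm (T *\<^sub>R w) = B + norm b" using assms(2) T B by (simp add: T_def)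
  moreover have "norm (T *\<^sub>R w) - norm (-b) \<le> norm (T *\<^sub>R w - (-b))" by (rule norm_triangle_ineq2)
  ultimately have "norm z \<ge> B" unfolding z_def by (simp add: add.commute)
  then have "z \<notin> ball 0 B" by simp
  then have zo: "z \<in> outside S" using outside_subset_convex[of "ball 0 B" S] B by auto
  have "closed_segment b z \<subseteq> - S"
  proof
    fix q assume "q \<in> closed_segment b z"
    then obtain u where u: "0 \<le> u" "u \<le> 1" "q = (1-u) *\<^sub>R b + u *\<^sub>R z" unfolding closed_segment_def by auto
    have "q = b + (u*T) *\<^sub>R w" using u by (simp add: z_def algebra_simps)
    moreover have "u*T \<ge> 0" using u T by simp
    ultimately show "q \<in> - S" using assms(3) by auto
  qed
  then have "connected_component (- S) z b"
    by (intro connected_componentI[OF connected_segment]) (auto simp: closed_segment_commute)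
  then show ?thesis using outside_same_component zo by blast
qed




lemma construct:
  fixes V :: "(real^2) set"
  assumes "finite V" "R \<subseteq> V"
  shows "\<exists>C. (\<exists>ps. C = polygon_cycle ps) \<and> simple_path C \<and> R \<subseteq> path_image C \<and> V - R \<subseteq> outside (path_image C)"
proof -
  obtain s where inj: "inj_on (xc s) V" using exists_inj_xc[OF assms(1)] by blast
  obtain Y0 where Y0: "\<forall>v\<in>V. Y0 < v$2" using finite_lower[of "(\<lambda>v. v$2) ` V"] assms(1) by auto
  obtain M0 where M0: "\<forall>v\<in>V. M0 < - \<bar>xc s v\<bar>" using finite_lower[of "(\<lambda>v. - \<bar>xc s v\<bar>) ` V"] assms(1) by auto
  define M where "M = max (- M0) 1"
  have M: "\<forall>v\<in>V. \<bar>xc s v\<bar> < M" using M0 by (auto simp: M_def)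
  have Mpos: "M > 0" by (simp add: M_def)
  define X where "X = xc s ` V"
  define D where "D = (\<lambda>p. \<bar>fst p - snd p\<bar>) ` ((X \<times> X) - {p. fst p = snd p})"
  have fX: "finite X" using assms(1) by (simp add: X_def)
  have "finite D" unfolding D_def using fX by simp
  moreover have "\<forall>d\<in>D. 0 < d" unfolding D_def by auto
  ultimately obtain e where e: "e > 0" "e < 1/2" "\<forall>d\<in>D. 2*e < d" using finite_eta by blast
  have gap: "2*e < \<bar>u - u'\<bar>" if "u \<in> X" "u' \<in> X" "u \<noteq> u'" for u u'
  proof -
    have "\<bar>u - u'\<bar> \<in> D" unfolding D_def using that by (intro image_eqI[of _ _ "(u,u')"]) auto
    then show ?thesis using e(3) by blast
  qed
  have "finite (xc s ` R)" using finite_subset[OF assms(2) assms(1)] by simp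
  define xs where "xs = sorted_list_of_set (xc s ` R)"
  have xs: "sorted_wrt (<) xs" "set xs = xc s ` R"
    unfolding xs_def using \<open>finite (xc s ` R)\<close> by (simp_all add: strict_sorted_list_of_set)
  have injR: "inj_on (xc s) R" using inj assms(2) inj_on_subset by blast
  define rd where "rd = the_inv_into R (xc s)"
  have rdR: "rd u \<in> R" "xc s (rd u) = u" if "u \<in> set xs" for u
    using that xs(2) injR unfolding rd_def
    by (auto simp: the_inv_into_f_f the_inv_into_into)
  have rdr: "rd (xc s r) = r" if "r \<in> R" for r
    using that injR unfolding rd_def by (simp add: the_inv_into_f_f)
  have XV: "set xs \<subseteq> X" using xs(2) assms(2) unfolding X_def by auto
  have xs2: "sorted_wrt (\<lambda>u u'. u + 2*e < u') xs"
  proof (rule sorted_wrt_mono_rel[OF _ xs(1)])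
    fix u u' assume "u \<in> set xs" "u' \<in> set xs" "u < u'"
    then have uu: "u \<in> X" "u' \<in> X" "u \<noteq> u'" "u < u'" using XV by auto
    then have "2*e < \<bar>u - u'\<bar>" using gap by blast
    then show "u + 2*e < u'" using uu(4) by linarith
  qed
  define a where "a = - M - 1"
  define bnd where "bnd = M + 1"
  define Y1 where "Y1 = Y0 - 1"
  define sp where "sp = spikes s e Y0 bnd rd xs"
  define ch where "ch = pt s a Y0 # sp"
  have xsM: "\<bar>u\<bar> < M" if "u \<in> set xs" for u using that XV M unfolding X_def by auto
  have rdx: "\<forall>u\<in>set xs. xc s (rd u) = u" using rdR by auto
  have ab: "a < bnd" using Mpos by (simp add: a_def bnd_def)
  have au: "\<forall>u\<in>set xs. a < u - e"
  proof
    fix u assume "u \<in> set xs"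
    then have "\<bar>u\<bar> < M" by (rule xsM)
    then show "a < u - e" using e(2) by (simp add: a_def)
  qed
  have ub: "\<forall>u\<in>set xs. u + e < bnd"
  proof
    fix u assume "u \<in> set xs"
    then have "\<bar>u\<bar> < M" by (rule xsM)
    then show "u + e < bnd" using e(2) by (simp add: bnd_def)
  qed
  have sp_low: "\<forall>q\<in>set sp. a < xc s q"
    unfolding sp_def by (rule spikes_lower[OF e(1) rdx ab au])
  have sp_sorted: "sorted_wrt (\<lambda>p q. xc s p < xc s q) sp"
    unfolding sp_def by (rule spikes_sorted[OF e(1) rdx xs2 ub])
  have ch_sorted: "sorted_wrt (\<lambda>p q. xc s p < xc s q) ch"
    unfolding ch_def using sp_low sp_sorted by simp
  have ch_len: "length ch \<ge> 2" unfolding ch_def sp_def using spikes_ne[of s e Y0 bnd rd xs]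
    by (cases "spikes s e Y0 bnd rd xs") auto
  have rdy: "\<forall>u\<in>set xs. Y0 < (rd u)$2" using rdR Y0 assms(2) by auto
  have ch_y: "\<forall>p\<in>set ch. Y0 \<le> p$2"
    unfolding ch_def sp_def using spikes_y[OF rdy] by auto
  have Y1Y0: "Y1 < Y0" by (simp add: Y1_def)
  define d1 where "d1 = pt s (xc s (hd ch)) Y1"
  define d2 where "d2 = pt s (xc s (last ch)) Y1"
  define C where "C = polygon_cycle (d1 # ch @ [d2])"
  have simple: "simple_path C"
    unfolding C_def d1_def d2_def by (rule cycle_simple[OF ch_sorted ch_len ch_y Y1Y0])
  have Ceq: "C = polygonal_path (d1 # ch @ [d2, d1])" by (simp add: C_def polygon_cycle_def)
  have "set ch \<subseteq> path_image C" unfolding Ceq using pp_vertices[of "d1 # ch @ [d2, d1]"] by auto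
  moreover have "R \<subseteq> set ch"
  proof
    fix r assume r: "r \<in> R"
    then have "xc s r \<in> set xs" using xs(2) by auto
    then have "rd (xc s r) \<in> set sp" unfolding sp_def using spikes_red by blast
    then show "r \<in> set ch" using rdr[OF r] by (simp add: ch_def)
  qed
  ultimately have red: "R \<subseteq> path_image C" by blast
  have imgC: "path_image C = closed_segment d1 (hd ch) \<union> path_image (polygonal_path ch) \<union> closed_segment (last ch) d2 \<union> closed_segment d2 d1"
  proof -
    have "path_image C = path_image (polygonal_path (((d1 # ch) @ [d2]) @ [d1]))" unfolding Ceq by simp
    also have "\<dots> = path_image (polygonal_path (d1 # ch)) \<union> closed_segment (last ch) d2 \<union> closed_segment d2 d1"
    proof -
      have i1: "path_image (polygonal_path (((d1 # ch) @ [d2]) @ [d1])) = path_image (polygonal_path ((d1 # ch) @ [d2])) \<union> closed_segment (last ((d1#ch)@[d2])) d1"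
        by (rule pp_image_snoc) simp
      have i2: "path_image (polygonal_path ((d1 # ch) @ [d2])) = path_image (polygonal_path (d1#ch)) \<union> closed_segment (last (d1#ch)) d2"
        by (rule pp_image_snoc) simp
      have "last (d1#ch) = last ch" by (simp add: ch_def)
      then show ?thesis using i1 i2 by simp
    qed
    also have "path_image (polygonal_path (d1 # ch)) = closed_segment d1 (hd ch) \<union> path_image (polygonal_path ch)"
      unfolding ch_def by (simp only: pp_image) simp
    finally show ?thesis .
  qed
  have esc: "\<forall>q\<in>path_image (polygonal_path ch). q$2 \<le> Y0 \<or> (\<exists>u\<in>set xs. \<bar>xc s q - u\<bar> \<le> e)"
    unfolding ch_def sp_def by (rule spikes_escape[OF e(1) rdx]) simp
  have hdy: "(hd ch)$2 = Y0" by (simp add: ch_def)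
  have lasty: "(last ch)$2 = Y0" by (simp add: ch_def sp_def spikes_last spikes_ne)
  have imgC2: "\<forall>q\<in>path_image C. q$2 \<le> Y0 \<or> (\<exists>u\<in>set xs. \<bar>xc s q - u\<bar> \<le> e)"
  proof
    fix q assume "q \<in> path_image C"
    then consider "q \<in> closed_segment d1 (hd ch)" | "q \<in> path_image (polygonal_path ch)"
      | "q \<in> closed_segment (last ch) d2" | "q \<in> closed_segment d2 d1" using imgC by blast
    then show "q$2 \<le> Y0 \<or> (\<exists>u\<in>set xs. \<bar>xc s q - u\<bar> \<le> e)"
    proof cases
      case 1 then show ?thesis using seg_y_bounds[OF 1] hdy Y1Y0 by (auto simp: d1_def)
    next
      case 2 then show ?thesis using esc by blast
    next
      case 3 then show ?thesis using seg_y_bounds[OF 3] lasty Y1Y0 by (auto simp: d2_def)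
    next
      case 4 then show ?thesis using seg_y_bounds[OF 4] Y1Y0 by (auto simp: d1_def d2_def)
    qed
  qed
  have blue: "V - R \<subseteq> outside (path_image C)"
  proof
    fix b assume b: "b \<in> V - R"
    define w where "w = pt s 0 1"
    have w0: "w \<noteq> 0" unfolding w_def by (metis pt_simps(2) zero_index zero_neq_one)
    have bnd_img: "bounded (path_image C)" using simple by (simp add: bounded_path_image simple_path_imp_path)
    have far: "\<bar>xc s b - u\<bar> > e" if uxs: "u \<in> set xs" for u
    proof -
      obtain r where r: "r \<in> R" "u = xc s r" using uxs xs(2) by auto
      have "r \<noteq> b" using r b by auto
      then have "xc s b \<noteq> u" using inj r b assms(2) by (auto dest: inj_onD)
      moreover have "xc s b \<in> X" using b unfolding X_def by auto
      ultimately show ?thesis using gap[of "xc s b" u] XV uxs e(1) by auto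
    qed
    have "\<forall>t\<ge>0. b + t *\<^sub>R w \<notin> path_image C"
    proof (intro allI impI notI)
      fix t :: real assume t: "t \<ge> 0" "b + t *\<^sub>R w \<in> path_image C"
      have x: "xc s (b + t *\<^sub>R w) = xc s b" by (simp add: xc_add w_def)
      have y: "(b + t *\<^sub>R w)$2 = b$2 + t" by (simp add: w_def)
      have "Y0 < b$2" using Y0 b by auto
      then have "\<not> (b + t *\<^sub>R w)$2 \<le> Y0" using y t(1) by linarith
      then obtain u where u: "u \<in> set xs" "\<bar>xc s (b + t *\<^sub>R w) - u\<bar> \<le> e"
        using imgC2 t(2) by blast
      then show False using far[OF u(1)] x by simp
    qed
    then show "b \<in> outside (path_image C)" using escape_outside[OF bnd_img w0] by blast
  qed
  have "\<exists>ps. C = polygon_cycle ps" unfolding C_def by blast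
  then show ?thesis using simple red blue by blast
qed

theorem theorem1:
  fixes V :: "(real^2) set" and E :: "(real^2) set set"
  assumes "finite V"
    and "\<forall>A\<in>E. A \<subseteq> V \<and> card A \<ge> 2"
  shows "(\<exists>C. separating_cycle E C) \<longleftrightarrow> two_colorable V E"
proof
  assume "\<exists>C. separating_cycle E C"
  then obtain C where C: "separating_cycle E C" by blast
  define c where "c = (\<lambda>x. x \<in> inside (path_image C) \<union> path_image C)"
  have sc: "\<forall>A\<in>E. A \<inter> (inside (path_image C) \<union> path_image C) \<noteq> {} \<and> A \<inter> outside (path_image C) \<noteq> {}"
    using C unfolding separating_cycle_def by (rule conjunct2[OF conjunct2])
  have "\<forall>A\<in>E. \<exists>x\<in>A. \<exists>y\<in>A. c x \<noteq> c y"
  proof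
    fix A assume A: "A \<in> E"
    have h: "A \<inter> (inside (path_image C) \<union> path_image C) \<noteq> {}" "A \<inter> outside (path_image C) \<noteq> {}"
      using sc A by blast+
    obtain x where x: "x \<in> A" "x \<in> inside (path_image C) \<union> path_image C" using h(1) by blast
    obtain y where y: "y \<in> A" "y \<in> outside (path_image C)" using h(2) by blast
    note xy = x y
    have "\<not> c y" using xy(4) unfolding c_def using inside_Int_outside outside_no_overlap by blast
    moreover have "c x" using xy(2) unfolding c_def by simp
    ultimately show "\<exists>x\<in>A. \<exists>y\<in>A. c x \<noteq> c y" using xy(1) xy(3) by blast
  qed
  then show "two_colorable V E" unfolding two_colorable_def by blast
next
  assume "two_colorable V E"
  then obtain c :: "real^2 \<Rightarrow> bool" where c: "\<forall>A\<in>E. \<exists>x\<in>A. \<exists>y\<in>A. c x \<noteq> c y" unfolding two_colorable_def by blast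
  define R where "R = {v \<in> V. c v}"
  have RV: "R \<subseteq> V" unfolding R_def by blast
  obtain C where C0: "(\<exists>ps. C = polygon_cycle ps) \<and> simple_path C \<and> R \<subseteq> path_image C \<and> V - R \<subseteq> outside (path_image C)"
    using construct[OF assms(1) RV] by (rule exE)
  note C = C0[THEN conjunct1] C0[THEN conjunct2, THEN conjunct1] C0[THEN conjunct2, THEN conjunct2, THEN conjunct1]
    C0[THEN conjunct2, THEN conjunct2, THEN conjunct2]
  have "\<forall>A\<in>E. A \<inter> (inside (path_image C) \<union> path_image C) \<noteq> {} \<and> A \<inter> outside (path_image C) \<noteq> {}"
  proof
    fix A assume A: "A \<in> E"
    then obtain x y where xy: "x \<in> A" "y \<in> A" "c x \<noteq> c y" using c by blast
    have AV: "A \<subseteq> V" using A assms(2) by blast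
    show "A \<inter> (inside (path_image C) \<union> path_image C) \<noteq> {} \<and> A \<inter> outside (path_image C) \<noteq> {}"
    proof (cases "c x")
      case True
      then have "x \<in> R" "y \<in> V - R" using xy AV unfolding R_def by auto
      then show ?thesis using C(3,4) xy(1,2) by blast
    next
      case False
      then have "y \<in> R" "x \<in> V - R" using xy AV unfolding R_def by auto
      then show ?thesis using C(3,4) xy(1,2) by blast
    qed
  qed
  then have "separating_cycle E C" using C(1,2) unfolding separating_cycle_def by (intro conjI)
  then show "\<exists>C. separating_cycle E C" by blast
qed

end
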